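(* Let $M$ be an observable FSM with $n$ states, all reachable, such that every state of $M$ is d-reachable and every two distinct states $s_1\neq s_2$ satisfy $\Delta_M(s_1)\neq\Delta_M(s_2)$. Let $m\ge n$. Then every test suite $T$ produced by $\textsc{GenerateTestSuite}(M,m)$ satisfies $|T|\le n\cdot|\Sigma_I|^{m-n+1}$.
   Context: FSMs and notation. An FSM is $M=(S,s_0,\Sigma_I,\Sigma_O,h_M)$ with finite state set $S$, initial state $s_0$, finite input/output alphabets and $h_M\subseteq S\times\Sigma_I\times\Sigma_O\times S$. IO sequences are written $\bar x/\bar y$. $L_M(s)$ is the set of IO sequences $x_1\dots x_k/y_1\dots y_k$ such that there are states $s=q_0,\dots,q_k$ with $(q_{i-1},x_i,y_i,q_i)\in h_M$; $L(M)=L_M(s_0)$. $out(s,x)=\{y\mid\exists s'.(s,x,y,s')\in h_M\}$. $M$ is observable if for all $s,x,y$ at most one $s'$ has $(s,x,y,s')\in h_M$; then $s\text{-after-}\alpha$ is the unique state reached from $s$ by $\alpha\in L_M(s)$. $\Delta_M(s)=\{x\mid out(s,x)\neq\varnothing\}$. $\mathrm{Pref}$ denotes the set of prefixes (including $\epsilon$), lifted to sets; $A.B=\{a.b\mid a\in A,b\in B\}$ with $A.\varnothing=A$. d-reachability and state cover. $\bar x$ is strongly defined in $M$ if for every prefix $\bar x_1.x$ of $\bar x$ ($x\in\Sigma_I$) and every $\bar x_1/\bar y_1\in L(M)$, $x\in\Delta_M(s_0\text{-after-}\bar x_1/\bar y_1)$. $\bar x$ d-reaches $s$ if $\bar x$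 is strongly defined and $\{s_0\text{-after-}\bar x/\bar y\mid \bar x/\bar y\in L(M)\}=\{s\}$. For $S'\subseteq S$, $\widehat{S'}$ is the set of states in $S'$ d-reached by some input sequence. A state cover $V$ is a set consisting of $\epsilon$ (which d-reaches $s_0$) and, for every other d-reachable state, exactly one input sequence d-reaching it; for $s\in\widehat S$ let $\bar v_s\in V$ be the element d-reaching $s$. $V'=\{\bar x/\bar y\in L(M)\mid \bar x\in V\}$. r-distinguishability. Every $W\subseteq\Sigma_I^*$ r(0)-distinguishes states $s_1,s_2$ with $\Delta_M(s_1)\neq\Delta_M(s_2)$. For $k\ge0$, $W$ r($k+1$)-distinguishes $s_1,s_2$ if it r($k$)-distinguishes them, or there is $x\in\Delta_M(s_1)\cap\Delta_M(s_2)\cap\mathrm{Pref}(W)$ such that for every $y\in out(s_1,x)\cap out(s_2,x)$ some $W'$ with $\{x\}.W'\subseteq\mathrm{Pref}(W)$ r($k$)-distinguishes $s_1\text{-after-}x/y$ and $s_2\text{-after-}x/y$. $W$ r-distinguishes $s_1,s_2$ if it r($k$)-distinguishes them for some $k$; states are r-distinguishable if some $W$ r-distinguishes them. $S_D$ is the set of all maximal (w.r.t. inclusion) subsets of $S$ whose elements are pairwise r-distinguishable (a state r-distinguishable from no other state yields a singleton). Termination and traversal sets. For $s\in\widehat S$, $\bar x/\bar y\in L_M(s)$ and $S'\in S_D$, say $S'$ terminates $\bar x/\bar y$ for $s$ and $m$ if the number of nonempty prefixes $\pi$ of $\bar x/\bar y$ with $s\text{-after-}\pi\in S'$ equals $m-|\widehat{S'}|+1$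 and no proper prefix of $\bar x/\bar y$ is terminated for $s$ and $m$ by any element of $S_D$. $term(s,\bar x/\bar y,m)$ is the set of such $S'$. $Tr(s,m)=\mathrm{Pref}\{\bar x\mid\exists\bar y.\ \bar x/\bar y\in L_M(s)\wedge term(s,\bar x/\bar y,m)\neq\varnothing\}$. Procedure $\textsc{GenerateTestSuite}(M,m)$: (1) Choose a state cover $V$, form $V'$, and set $T:=\bigcup_{s\in\widehat S}\{\bar v_s\}.Tr(s,m)$. (2) Let $D=\{(s,\bar x/\bar y)\mid s\in\widehat S,\ \bar x/\bar y\in L_M(s),\ term(s,\bar x/\bar y,m)\neq\varnothing\}$. For each $(s,\bar x/\bar y)\in D$: choose some $S_i\in term(s,\bar x/\bar y,m)$; then for every pair of traces $\bar x_1/\bar y_1,\bar x_2/\bar y_2$ in $V'\cup\{\beta.\pi\mid \beta\in V'\text{ with input portion }\bar v_s,\ \pi\in\mathrm{Pref}(\bar x/\bar y)\}$, let $s_j=s_0\text{-after-}\bar x_j/\bar y_j$; if $s_1\neq s_2$ and $s_1,s_2\in S_i$, let $W'=\{\bar x'\mid \bar x_1.\bar x'\in\mathrm{Pref}(T)\text{ and }\bar x_2.\bar x'\in\mathrm{Pref}(T)\}$ (for the current $T$); if $W'$ does not r-distinguish $s_1,s_2$, choose any $W$ that r-distinguishes $s_1,s_2$ and set $T:=T\cup\{\bar x_1,\bar x_2\}.W$. (3) Finally remove from $T$ every sequence that is a proper prefix of another element of $T$, and return $T$. *)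

theory Defs
  imports Main
begin

(* Finite state machines M = (S, s0, Sigma_I, Sigma_O, h_M).
   Input sequences are lists of inputs; IO sequences xs/ys are lists of
   (input, output) pairs. *)
record ('s, 'x, 'y) fsm =
  states  :: "'s set"
  initial :: 's
  inputs  :: "'x set"
  outputs :: "'y set"
  trans   :: "('s \<times> 'x \<times> 'y \<times> 's) set"

definition well_formed :: "('s,'x,'y) fsm \<Rightarrow> bool" where
  "well_formed M \<longleftrightarrow> finite (states M) \<and> initial M \<in> states M \<and>
     finite (inputs M) \<and> finite (outputs M) \<and>
     trans M \<subseteq> states M \<times> inputs M \<times> outputs M \<times> states M"

inductive path :: "('s,'x,'y) fsm \<Rightarrow> 's \<Rightarrow> ('x \<times> 'y) list \<Rightarrow> 's \<Rightarrow> bool"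
  for M where
  nil:  "path M s [] s"
| cons: "(s, x, y, s1) \<in> trans M \<Longrightarrow> path M s1 io s' \<Longrightarrow> path M s ((x, y) # io) s'"

definition lang :: "('s,'x,'y) fsm \<Rightarrow> 's \<Rightarrow> ('x \<times> 'y) list set" where
  "lang M s = {io. \<exists>s'. path M s io s'}"

definition out :: "('s,'x,'y) fsm \<Rightarrow> 's \<Rightarrow> 'x \<Rightarrow> 'y set" where
  "out M s x = {y. \<exists>s'. (s, x, y, s') \<in> trans M}"

definition observable :: "('s,'x,'y) fsm \<Rightarrow> bool" where
  "observable M \<longleftrightarrow> (\<forall>s x y s1 s2. (s, x, y, s1) \<in> trans M \<longrightarrow> (s, x, y, s2) \<in> trans M \<longrightarrow> s1 = s2)"

(* s-after-io (meaningful for observable M and io in L_M(s)) *)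
definition after :: "('s,'x,'y) fsm \<Rightarrow> 's \<Rightarrow> ('x \<times> 'y) list \<Rightarrow> 's" where
  "after M s io = (THE s'. path M s io s')"

definition Delta :: "('s,'x,'y) fsm \<Rightarrow> 's \<Rightarrow> 'x set" where
  "Delta M s = {x. out M s x \<noteq> {}}"

definition reachable :: "('s,'x,'y) fsm \<Rightarrow> 's \<Rightarrow> bool" where
  "reachable M s \<longleftrightarrow> (\<exists>io. path M (initial M) io s)"

definition pref :: "'a list set \<Rightarrow> 'a list set" where
  "pref A = {p. \<exists>a\<in>A. \<exists>r. a = p @ r}"

(* A.B with the convention A.{} = A *)
definition cat :: "'a list set \<Rightarrow> 'a list set \<Rightarrow> 'a list set" where
  "cat A B = (if B = {} then A else {a @ b | a b. a \<in> A \<and> b \<in> B})"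

definition strongly_defined :: "('s,'x,'y) fsm \<Rightarrow> 'x list \<Rightarrow> bool" where
  "strongly_defined M xs \<longleftrightarrow>
     (\<forall>xs1 x r. xs = xs1 @ [x] @ r \<longrightarrow>
        (\<forall>io q. map fst io = xs1 \<longrightarrow> path M (initial M) io q \<longrightarrow> x \<in> Delta M q))"

definition d_reaches :: "('s,'x,'y) fsm \<Rightarrow> 'x list \<Rightarrow> 's \<Rightarrow> bool" where
  "d_reaches M xs s \<longleftrightarrow> strongly_defined M xs \<and>
     {q. \<exists>io. map fst io = xs \<and> path M (initial M) io q} = {s}"

definition d_reachable :: "('s,'x,'y) fsm \<Rightarrow> 's \<Rightarrow> bool" where
  "d_reachable M s \<longleftrightarrow> (\<exists>xs. d_reaches M xs s)"

definition dreach :: "('s,'x,'y) fsm \<Rightarrow> 's set \<Rightarrow> 's set" where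
  "dreach M S' = {s \<in> S'. d_reachable M s}"

(* a state cover V = v ` \<widehat>S, with v s = \<bar>v_s and v s0 = [] *)
definition state_cover :: "('s,'x,'y) fsm \<Rightarrow> ('s \<Rightarrow> 'x list) \<Rightarrow> bool" where
  "state_cover M v \<longleftrightarrow> v (initial M) = [] \<and>
     (\<forall>s \<in> dreach M (states M). d_reaches M (v s) s)"

fun rdist_k :: "('s,'x,'y) fsm \<Rightarrow> 'x list set \<Rightarrow> nat \<Rightarrow> 's \<Rightarrow> 's \<Rightarrow> bool" where
  "rdist_k M W 0 s1 s2 = (Delta M s1 \<noteq> Delta M s2)"
| "rdist_k M W (Suc k) s1 s2 = (rdist_k M W k s1 s2 \<or>
     (\<exists>x \<in> Delta M s1 \<inter> Delta M s2. [x] \<in> pref W \<and>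
        (\<forall>y \<in> out M s1 x \<inter> out M s2 x. \<exists>W'. cat {[x]} W' \<subseteq> pref W \<and>
           rdist_k M W' k (after M s1 [(x, y)]) (after M s2 [(x, y)]))))"

definition r_distinguishes :: "('s,'x,'y) fsm \<Rightarrow> 'x list set \<Rightarrow> 's \<Rightarrow> 's \<Rightarrow> bool" where
  "r_distinguishes M W s1 s2 \<longleftrightarrow> (\<exists>k. rdist_k M W k s1 s2)"

definition r_distinguishable :: "('s,'x,'y) fsm \<Rightarrow> 's \<Rightarrow> 's \<Rightarrow> bool" where
  "r_distinguishable M s1 s2 \<longleftrightarrow> (\<exists>W. r_distinguishes M W s1 s2)"

definition pairwise_rd :: "('s,'x,'y) fsm \<Rightarrow> 's set \<Rightarrow> bool" where
  "pairwise_rd M A \<longleftrightarrow> (\<forall>s1\<in>A. \<forall>s2\<in>A. s1 \<noteq> s2 \<longrightarrow> r_distinguishable M s1 s2)"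

definition SD :: "('s,'x,'y) fsm \<Rightarrow> 's set set" where
  "SD M = {A. A \<subseteq> states M \<and> pairwise_rd M A \<and>
              (\<forall>B. A \<subseteq> B \<and> B \<subseteq> states M \<and> pairwise_rd M B \<longrightarrow> B = A)}"

definition visits :: "('s,'x,'y) fsm \<Rightarrow> 's \<Rightarrow> ('x \<times> 'y) list \<Rightarrow> 's set \<Rightarrow> nat" where
  "visits M s io S' = card {k \<in> {1..length io}. after M s (take k io) \<in> S'}"

function termset :: "('s,'x,'y) fsm \<Rightarrow> 's \<Rightarrow> ('x \<times> 'y) list \<Rightarrow> nat \<Rightarrow> 's set set" where
  "termset M s io m =
     (if (\<forall>k \<in> {..<length io}. termset M s (take k io) m = {})
      then {S' \<in> SD M. visits M s io S' = m - card (dreach M S') + 1}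
      else {})"
  by pat_completeness auto
termination
  by (relation "measure (\<lambda>(M, s, io, m). length io)") auto

definition Tr :: "('s,'x,'y) fsm \<Rightarrow> 's \<Rightarrow> nat \<Rightarrow> 'x list set" where
  "Tr M s m = pref {map fst io | io. io \<in> lang M s \<and> termset M s io m \<noteq> {}}"

definition Dset :: "('s,'x,'y) fsm \<Rightarrow> nat \<Rightarrow> ('s \<times> ('x \<times> 'y) list) set" where
  "Dset M m = {(s, io). s \<in> dreach M (states M) \<and> io \<in> lang M s \<and> termset M s io m \<noteq> {}}"

definition Vtraces :: "('s,'x,'y) fsm \<Rightarrow> ('s \<Rightarrow> 'x list) \<Rightarrow> ('x \<times> 'y) list set" where
  "Vtraces M v = {io \<in> lang M (initial M). map fst io \<in> v ` dreach M (states M)}"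

definition pair_traces :: "('s,'x,'y) fsm \<Rightarrow> ('s \<Rightarrow> 'x list) \<Rightarrow> 's \<Rightarrow> ('x \<times> 'y) list \<Rightarrow> ('x \<times> 'y) list set" where
  "pair_traces M v s io = Vtraces M v \<union>
     {b @ p | b p. b \<in> Vtraces M v \<and> map fst b = v s \<and> p \<in> pref {io}}"

definition process_pair :: "('s,'x,'y) fsm \<Rightarrow> 's set \<Rightarrow> 'x list set \<Rightarrow>
    (('x \<times> 'y) list \<times> ('x \<times> 'y) list) \<Rightarrow> 'x list set \<Rightarrow> bool" where
  "process_pair M Si T tp T' =
     (let t1 = fst tp; t2 = snd tp;
          s1 = after M (initial M) t1; s2 = after M (initial M) t2;
          x1 = map fst t1; x2 = map fst t2;
          W' = {x'. x1 @ x' \<in> pref T \<and> x2 @ x' \<in> pref T}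
      in if s1 \<noteq> s2 \<and> s1 \<in> Si \<and> s2 \<in> Si \<and> \<not> r_distinguishes M W' s1 s2
         then (\<exists>W. r_distinguishes M W s1 s2 \<and> T' = T \<union> cat {x1, x2} W)
         else T' = T)"

inductive process_pairs :: "('s,'x,'y) fsm \<Rightarrow> 's set \<Rightarrow> 'x list set \<Rightarrow>
    (('x \<times> 'y) list \<times> ('x \<times> 'y) list) list \<Rightarrow> 'x list set \<Rightarrow> bool" for M Si where
  "process_pairs M Si T [] T"
| "process_pair M Si T tp T1 \<Longrightarrow> process_pairs M Si T1 tps T2 \<Longrightarrow>
   process_pairs M Si T (tp # tps) T2"

(* processing the elements of D in some order; for each, some choice of S_i
   and some enumeration order of all pairs of traces *)
inductive process_D :: "('s,'x,'y) fsm \<Rightarrow> nat \<Rightarrow> ('s \<Rightarrow> 'x list) \<Rightarrow> 'x list set \<Rightarrow>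
    ('s \<times> ('x \<times> 'y) list) list \<Rightarrow> 'x list set \<Rightarrow> bool" for M m v where
  "process_D M m v T [] T"
| "Si \<in> termset M s io m \<Longrightarrow> distinct tps \<Longrightarrow>
   set tps = pair_traces M v s io \<times> pair_traces M v s io \<Longrightarrow>
   process_pairs M Si T tps T1 \<Longrightarrow> process_D M m v T1 ds T2 \<Longrightarrow>
   process_D M m v T ((s, io) # ds) T2"

(* T is a possible result of GenerateTestSuite(M, m) *)
definition generate_test_suite :: "('s,'x,'y) fsm \<Rightarrow> nat \<Rightarrow> 'x list set \<Rightarrow> bool" where
  "generate_test_suite M m T \<longleftrightarrow>
     (\<exists>v ds T2. state_cover M v \<and>
        distinct ds \<and> set ds = Dset M m \<and>
        process_D M m v (\<Union>s \<in> dreach M (states M). cat {v s} (Tr M s m)) ds T2 \<and>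
        T = {t \<in> T2. \<not> (\<exists>t' \<in> T2. \<exists>r. r \<noteq> [] \<and> t' = t @ r)})"

end

theory Submission
  imports Defs
begin

declare termset.simps [simp del]

lemma path_states:
  assumes "path M s io q" "well_formed M" "s \<in> states M"
  shows "q \<in> states M \<and> set (map fst io) \<subseteq> inputs M"
  using assms
  by (induction rule: path.induct) (auto simp: well_formed_def)

lemma path_unique:
  assumes "path M s io q1" "observable M" "path M s io q2"
  shows "q1 = q2"
  using assms
proof (induction arbitrary: q2 rule: path.induct)
  case (nil s)
  then show ?case by (auto elim: path.cases)
next
  case (cons s x y s1 io s')
  from cons.prems(2) obtain s1' where "(s, x, y, s1') \<in> trans M" "path M s1' io q2"
    by (auto elim: path.cases)
  with cons show ?case unfolding observable_def by metis
qed

lemma path_take: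
  assumes "path M s io q"
  shows "\<exists>q'. path M s (take k io) q'"
  using assms
proof (induction arbitrary: k rule: path.induct)
  case (nil s)
  then show ?case by (auto intro: path.nil)
next
  case (cons s x y s1 io s')
  show ?case
  proof (cases k)
    case 0 then show ?thesis by (auto intro: path.nil)
  next
    case (Suc j)
    from cons.IH obtain a where "path M s1 (take j io) a" by blast
    with cons.hyps(1) Suc show ?thesis by (auto intro: path.cons)
  qed
qed

lemma after_in:
  assumes "well_formed M" "observable M" "s \<in> states M" "io \<in> lang M s"
  shows "after M s (take k io) \<in> states M"
proof -
  from assms(4) obtain q where q: "path M s io q" by (auto simp: lang_def)
  then obtain q' where q': "path M s (take k io) q'" using path_take[OF q] by blast
  have "after M s (take k io) = q'"
    unfolding after_def using q' path_unique[OF _ assms(2)] by blast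
  with path_states[OF q' assms(1,3)] show ?thesis by simp
qed

lemma SD_eq:
  assumes "\<forall>s1 \<in> states M. \<forall>s2 \<in> states M. s1 \<noteq> s2 \<longrightarrow> Delta M s1 \<noteq> Delta M s2"
    and "S' \<in> SD M"
  shows "S' = states M"
proof -
  have "pairwise_rd M (states M)"
    using assms(1) unfolding pairwise_rd_def r_distinguishable_def r_distinguishes_def
    by (metis rdist_k.simps(1))
  with assms(2) show ?thesis unfolding SD_def by blast
qed

lemma termset_SD:
  assumes "Si \<in> termset M s io m"
  shows "Si \<in> SD M"
  using assms by (subst (asm) termset.simps) (auto split: if_splits)

lemma termset_visits:
  assumes "Si \<in> termset M s io m"
  shows "visits M s io Si = m - card (dreach M Si) + 1"
  using assms by (subst (asm) termset.simps) (auto split: if_splits)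

lemma termset_len:
  assumes wf: "well_formed M" and obs: "observable M" and sS: "s \<in> states M"
    and L: "io \<in> lang M s"
    and D: "\<forall>s1 \<in> states M. \<forall>s2 \<in> states M. s1 \<noteq> s2 \<longrightarrow> Delta M s1 \<noteq> Delta M s2"
    and dr: "\<forall>s \<in> states M. d_reachable M s"
    and ne: "termset M s io m \<noteq> {}"
  shows "length io = m - card (states M) + 1"
proof -
  from ne obtain Si where Si: "Si \<in> termset M s io m" by blast
  have eq: "Si = states M" using SD_eq[OF D termset_SD[OF Si]] .
  have dre: "dreach M (states M) = states M" using dr by (auto simp: dreach_def)
  have "{k \<in> {1..length io}. after M s (take k io) \<in> states M} = {1..length io}"
    using after_in[OF wf obs sS L] by auto
  then have "visits M s io (states M) = length io" by (simp add: visits_def)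
  with termset_visits[OF Si] eq dre show ?thesis by simp
qed

lemma process_pair_id:
  assumes "\<forall>s1 \<in> states M. \<forall>s2 \<in> states M. s1 \<noteq> s2 \<longrightarrow> Delta M s1 \<noteq> Delta M s2"
    and "Si \<subseteq> states M" and "process_pair M Si T tp T'"
  shows "T' = T"
proof -
  have "\<And>W s1 s2. s1 \<in> Si \<Longrightarrow> s2 \<in> Si \<Longrightarrow> s1 \<noteq> s2 \<Longrightarrow> r_distinguishes M W s1 s2"
    unfolding r_distinguishes_def using assms(1,2) by (metis rdist_k.simps(1) subsetD)
  then show ?thesis using assms(3) unfolding process_pair_def Let_def
    by (auto split: if_splits)
qed

lemma process_pairs_id:
  assumes "process_pairs M Si T tps T2"
    "\<forall>s1 \<in> states M. \<forall>s2 \<in> states M. s1 \<noteq> s2 \<longrightarrow> Delta M s1 \<noteq> Delta M s2"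
    "Si \<subseteq> states M"
  shows "T2 = T"
  using assms
  by (induction rule: process_pairs.induct) (auto dest: process_pair_id)

lemma process_D_id:
  assumes "process_D M m v T ds T2"
    "\<forall>s1 \<in> states M. \<forall>s2 \<in> states M. s1 \<noteq> s2 \<longrightarrow> Delta M s1 \<noteq> Delta M s2"
  shows "T2 = T"
  using assms
proof (induction rule: process_D.induct)
  case (1 T)
  then show ?case by simp
next
  case (2 Si s io tps T T1 ds T2)
  have "Si = states M" using SD_eq[OF 2(7) termset_SD[OF 2(1)]] .
  then have "T1 = T" using process_pairs_id[OF 2(4) 2(7)] by simp
  with 2 show ?case by simp
qed

theorem mainTheorem3:
  fixes M :: "('s, 'x, 'y) fsm" and m n :: nat and T :: "'x list set"
  assumes "well_formed M"
    and "inputs M \<noteq> {}"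
    and "observable M"
    and "card (states M) = n"
    and "\<forall>s \<in> states M. reachable M s"
    and "\<forall>s \<in> states M. d_reachable M s"
    and "\<forall>s1 \<in> states M. \<forall>s2 \<in> states M. s1 \<noteq> s2 \<longrightarrow> Delta M s1 \<noteq> Delta M s2"
    and "m \<ge> n"
    and "generate_test_suite M m T"
  shows "finite T \<and> card T \<le> n * card (inputs M) ^ (m - n + 1)"
proof -
  note wf = assms(1) and obs = assms(3) and dr = assms(6) and D = assms(7)
  define K where "K = m - n + 1"
  define I where "I = inputs M"
  define S where "S = states M"
  define B where "B s = {map fst io | io. io \<in> lang M s \<and> termset M s io m \<noteq> {}}" for s
  define Lk where "Lk = {xs. set xs \<subseteq> I \<and> length xs = K}"
  have finI: "finite I" using wf by (simp add: well_formed_def I_def)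
  have finS: "finite S" using wf by (simp add: well_formed_def S_def)
  have I1: "card I \<ge> 1" using finI assms(2) I_def by (simp add: Suc_le_eq card_gt_0_iff)
  have finLk: "finite Lk" unfolding Lk_def using finI by (simp add: finite_lists_length_eq)
  have cardLk: "card Lk = card I ^ K" unfolding Lk_def using finI by (simp add: card_lists_length_eq)
  have hB: "B s \<subseteq> Lk" if sS: "s \<in> S" for s
  proof
    fix xs assume "xs \<in> B s"
    then obtain io where io: "xs = map fst io" "io \<in> lang M s" "termset M s io m \<noteq> {}"
      unfolding B_def by blast
    have "length io = m - n + 1"
      using termset_len[OF wf obs sS[unfolded S_def] io(2) D dr io(3)] assms(4) by simp
    moreover from io(2) obtain q where "path M s io q" by (auto simp: lang_def)
    from path_states[OF this wf sS[unfolded S_def]] have "set (map fst io) \<subseteq> I" by (simp add: I_def)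
    ultimately show "xs \<in> Lk" using io(1) by (simp add: Lk_def K_def)
  qed
  obtain v ds T2 where gen: "state_cover M v" "process_D M m v (\<Union>s \<in> dreach M (states M). cat {v s} (Tr M s m)) ds T2"
     "T = {t \<in> T2. \<not> (\<exists>t' \<in> T2. \<exists>r. r \<noteq> [] \<and> t' = t @ r)}"
    using assms(9) unfolding generate_test_suite_def by blast
  have dre: "dreach M (states M) = S" using dr by (auto simp: dreach_def S_def)
  have T2eq: "T2 = (\<Union>s \<in> S. cat {v s} (Tr M s m))"
    using process_D_id[OF gen(2) D] dre by simp
  define C where "C s = (if Tr M s m = {} then {v s} else (\<lambda>t. v s @ t) ` B s)" for s
  have cardC: "finite (C s) \<and> card (C s) \<le> card I ^ K" if sS: "s \<in> S" for s
  proof (cases "Tr M s m = {}")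
    case True
    then show ?thesis using I1 by (simp add: C_def)
  next
    case False
    have fB: "finite (B s)" using finite_subset[OF hB[OF sS] finLk] .
    have "card (B s) \<le> card Lk" using card_mono[OF finLk hB[OF sS]] .
    then show ?thesis using False fB card_image_le[OF fB, of "\<lambda>t. v s @ t"] cardLk
      by (simp add: C_def)
  qed
  have Tsub: "T \<subseteq> (\<Union>s \<in> S. C s)"
  proof
    fix t assume tT: "t \<in> T"
    then have "t \<in> T2" and nmax: "\<not> (\<exists>t' \<in> T2. \<exists>r. r \<noteq> [] \<and> t' = t @ r)" using gen(3) by auto
    then obtain s where sS: "s \<in> S" and tA: "t \<in> cat {v s} (Tr M s m)" using T2eq by auto
    have sub: "cat {v s} (Tr M s m) \<subseteq> T2" using T2eq sS by auto
    show "t \<in> (\<Union>s \<in> S. C s)"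
    proof (cases "Tr M s m = {}")
      case True
      then show ?thesis using tA sS by (auto simp: C_def cat_def)
    next
      case False
      then obtain b where tb: "t = v s @ b" and bT: "b \<in> Tr M s m" using tA by (auto simp: cat_def)
      then obtain a r where aB: "a \<in> B s" and ar: "a = b @ r"
        unfolding Tr_def pref_def B_def by blast
      have "a \<in> Tr M s m" using aB unfolding Tr_def pref_def B_def by blast
      then have "v s @ a \<in> T2" using sub False by (auto simp: cat_def)
      with nmax tb ar have "r = []" by auto
      with ar tb aB False sS show ?thesis by (auto simp: C_def)
    qed
  qed
  have finU: "finite (\<Union>s \<in> S. C s)" using finS cardC by blast
  have "card (\<Union>s \<in> S. C s) \<le> (\<Sum>s\<in>S. card (C s))" using card_UN_le[OF finS] .
  also have "\<dots> \<le> card S * card I ^ K" using sum_bounded_above[of S "\<lambda>s. card (C s)" "card I ^ K"] cardC by simp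
  finally have "card T \<le> card S * card I ^ K" using card_mono[OF finU Tsub] by linarith
  then show ?thesis using finite_subset[OF Tsub finU] assms(4)
    by (simp add: S_def I_def K_def)
qed

end
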